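(* Let $\Delta,\Sigma$ be alphabets, $\varphi:\Delta\to2^{\Sigma^*}$ a regular language substitution, and $K_1,K_2\subseteq\Delta^+$ regular languages such that $\mathcal{R}_1=(K_1,\varphi)$ and $\mathcal{R}_2=(K_2,\varphi)$ are finite. Then the set difference $\mathcal{R}_1-\mathcal{R}_2$ is a finite rational set of regular languages expressible as $(K_3,\varphi)$ for some regular language $K_3\subseteq K_1$.
   Context: A regular language substitution $\varphi:\Delta\to2^{\Sigma^*}$ maps each symbol to a regular language over $\Sigma$, extended by $\varphi(\delta w)=\varphi(\delta)\varphi(w)$. For $K\subseteq\Delta^+$, $(K,\varphi)=\{\varphi(w)\mid w\in K\}$; when $K$ is regular this set is a rational set of regular languages. *)

theory Defs
  imports Main
begin

definition lconc :: "'a list set \<Rightarrow> 'a list set \<Rightarrow> 'a list set" where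
  "lconc L M = {u @ v | u v. u \<in> L \<and> v \<in> M}"

definition lstar :: "'a list set \<Rightarrow> 'a list set" where
  "lstar L = {concat ws | ws. set ws \<subseteq> L}"

inductive regular :: "'a set \<Rightarrow> 'a list set \<Rightarrow> bool" for A :: "'a set" where
  reg_empty: "regular A {}"
| reg_eps: "regular A {[]}"
| reg_sym: "a \<in> A \<Longrightarrow> regular A {[a]}"
| reg_union: "regular A L \<Longrightarrow> regular A M \<Longrightarrow> regular A (L \<union> M)"
| reg_conc: "regular A L \<Longrightarrow> regular A M \<Longrightarrow> regular A (lconc L M)"
| reg_star: "regular A L \<Longrightarrow> regular A (lstar L)"

definition regular_subst :: "'d set \<Rightarrow> 's set \<Rightarrow> ('d \<Rightarrow> 's list set) \<Rightarrow> bool" where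
  "regular_subst Del Sig phi \<longleftrightarrow> (\<forall>d\<in>Del. regular Sig (phi d))"

fun subst_word :: "('d \<Rightarrow> 's list set) \<Rightarrow> 'd list \<Rightarrow> 's list set" where
  "subst_word phi [] = {[]}"
| "subst_word phi (d # w) = lconc (phi d) (subst_word phi w)"

definition rat_set :: "'d list set \<Rightarrow> ('d \<Rightarrow> 's list set) \<Rightarrow> 's list set set" where
  "rat_set K phi = (subst_word phi) ` K"

end

theory Submission
  imports Defs
begin

lemma reg_single: "set w \<subseteq> A \<Longrightarrow> regular A {w}"
proof (induction w)
  case Nil show ?case by (rule regular.reg_eps)
next
  case (Cons a w)
  have "regular A (lconc {[a]} {w})"
    using Cons by (intro reg_conc reg_sym) auto
  moreover have "lconc {[a]} {w} = {a # w}" by (auto simp: lconc_def)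
  ultimately show ?case by simp
qed

lemma reg_finite: "finite K \<Longrightarrow> K \<subseteq> lists A \<Longrightarrow> regular A K"
proof (induction K rule: finite_induct)
  case empty show ?case by (rule regular.reg_empty)
next
  case (insert x F)
  have "regular A ({x} \<union> F)"
    using insert by (intro reg_union reg_single) auto
  then show ?case by simp
qed

theorem proposition9:
  fixes Del :: "'d set" and Sig :: "'s set"
    and phi :: "'d \<Rightarrow> 's list set" and K1 K2 :: "'d list set"
  assumes "finite Del" and "finite Sig"
    and "regular_subst Del Sig phi"
    and "regular Del K1" and "K1 \<subseteq> lists Del - {[]}"
    and "regular Del K2" and "K2 \<subseteq> lists Del - {[]}"
    and "finite (rat_set K1 phi)" and "finite (rat_set K2 phi)"
  shows "\<exists>K3. regular Del K3 \<and> K3 \<subseteq> K1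
           \<and> rat_set K3 phi = rat_set K1 phi - rat_set K2 phi
           \<and> finite (rat_set K3 phi)"
proof -
  define R where "R = rat_set K1 phi - rat_set K2 phi"
  define g where "g L = (SOME w. w \<in> K1 \<and> subst_word phi w = L)" for L
  have g: "g L \<in> K1 \<and> subst_word phi (g L) = L" if "L \<in> R" for L
  proof -
    from that obtain w where "w \<in> K1" "subst_word phi w = L"
      unfolding R_def rat_set_def by auto
    then show ?thesis unfolding g_def by (rule someI[where x=w, OF conjI])
  qed
  define K3 where "K3 = g ` R"
  have fin: "finite R" using assms(8) unfolding R_def by auto
  have sub: "K3 \<subseteq> K1" using g unfolding K3_def by auto
  have "regular Del K3"
    using fin sub assms(5) unfolding K3_def by (intro reg_finite) auto
  moreover have img: "rat_set K3 phi = R"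
    unfolding rat_set_def K3_def image_image using g
    by (auto simp: image_iff)
  ultimately show ?thesis using sub fin unfolding R_def by auto
qed

end
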